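(* Let $1\le r\le\infty$ and define, for nonzero closed convex cones $P,Q\subseteq\mathbb R^n$, ${\rm Dis}_r(P,Q):={\rm dis}_r(P\cap S_n,Q\cap S_n)$. Then ${\rm Dis}_r$ is a distance on the set of nonzero closed convex cones of $\mathbb R^n$, and $${\rm Dis}_r(P,Q)=2\left\|\left(\sin\left[\tfrac{\Theta(P,Q)}{2}\right],\ \sin\left[\tfrac{\Theta(Q,P)}{2}\right]\right)\right\|_r .$$ In particular $\Lambda(P\cap S_n,Q\cap S_n)=2\sin[\Theta(P,Q)/2]$.
   Context: $S_n:=\{u\in\mathbb R^n:\|u\|=1\}$. For nonempty compact $C,D\subseteq\mathbb R^n$: $\mathtt d_D(x):=\min_{y\in D}\|x-y\|$, $\Lambda(C,D):=\max_{x\in C}\mathtt d_D(x)$, and ${\rm dis}_r(C,D):=\|(\Lambda(C,D),\Lambda(D,C))\|_r$, with $\|\cdot\|_r$ the $\ell^r$-norm on $\mathbb R^2$. For nonzero closed convex cones $P,Q$, $\Theta(P,Q):=\max_{u\in P\cap S_n}\min_{v\in Q\cap S_n}\arccos\langle u,v\rangle$. *)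

theory Defs
  imports "HOL-Analysis.Analysis"
begin

definition unit_sphere :: "'a::euclidean_space set" where
  "unit_sphere = {u. norm u = 1}"

definition distfun :: "'a::euclidean_space set \<Rightarrow> 'a \<Rightarrow> real" where
  "distfun D x = (INF y\<in>D. norm (x - y))"

definition excess :: "'a::euclidean_space set \<Rightarrow> 'a set \<Rightarrow> real" where
  "excess C D = (SUP x\<in>C. distfun D x)"

definition lr_norm :: "ereal \<Rightarrow> real \<Rightarrow> real \<Rightarrow> real" where
  "lr_norm r a b =
     (if r = \<infinity> then max \<bar>a\<bar> \<bar>b\<bar>
      else (\<bar>a\<bar> powr real_of_ereal r + \<bar>b\<bar> powr real_of_ereal r) powr (1 / real_of_ereal r))"

definition dis_r :: "ereal \<Rightarrow> 'a::euclidean_space set \<Rightarrow> 'a set \<Rightarrow> real" where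
  "dis_r r C D = lr_norm r (excess C D) (excess D C)"

definition Dis_r :: "ereal \<Rightarrow> 'a::euclidean_space set \<Rightarrow> 'a set \<Rightarrow> real" where
  "Dis_r r P Q = dis_r r (P \<inter> unit_sphere) (Q \<inter> unit_sphere)"

definition Theta :: "'a::euclidean_space set \<Rightarrow> 'a set \<Rightarrow> real" where
  "Theta P Q = (SUP u\<in>P \<inter> unit_sphere. INF v\<in>Q \<inter> unit_sphere. arccos (u \<bullet> v))"

definition nz_closed_convex_cones :: "'a::euclidean_space set set" where
  "nz_closed_convex_cones = {P. closed P \<and> convex_cone P \<and> P \<noteq> {0}}"

definition is_distance_on :: "'b set \<Rightarrow> ('b \<Rightarrow> 'b \<Rightarrow> real) \<Rightarrow> bool" where
  "is_distance_on K d \<longleftrightarrow>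
     (\<forall>P\<in>K. \<forall>Q\<in>K. 0 \<le> d P Q \<and> (d P Q = 0 \<longleftrightarrow> P = Q) \<and> d P Q = d Q P) \<and>
     (\<forall>P\<in>K. \<forall>Q\<in>K. \<forall>R\<in>K. d P R \<le> d P Q + d Q R)"

end

theory Submission
  imports Defs
begin

lemma powr_convex0:
  fixes p t x y :: real
  assumes p: "p \<ge> 1" and t: "0 \<le> t" "t \<le> 1" and x: "x \<ge> 0" and y: "y \<ge> 0"
  shows "((1 - t) * x + t * y) powr p \<le> (1 - t) * x powr p + t * y powr p"
proof -
  have tp: "s powr p \<le> s" if "0 \<le> s" "s \<le> 1" for s :: real
    using that p powr_le_one_le[of s p] by (cases "s = 0") auto
  show ?thesis
  proof (cases "x = 0")
    case True
    then have "((1 - t) * x + t * y) powr p = t powr p * y powr p"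
      using t y by (simp add: powr_mult)
    also have "\<dots> \<le> t * y powr p" using tp[of t] t by (intro mult_right_mono) auto
    finally show ?thesis using True p by simp
  next
    case xne: False
    show ?thesis
    proof (cases "y = 0")
      case True
      then have "((1 - t) * x + t * y) powr p = (1 - t) powr p * x powr p"
        using t x by (simp add: powr_mult)
      also have "\<dots> \<le> (1 - t) * x powr p" using tp[of "1 - t"] t by (intro mult_right_mono) auto
      finally show ?thesis using True p by simp
    next
      case False
      have "x \<in> {0<..}" "y \<in> {0<..}" using x y xne False by auto
      from convex_onD[OF powr_convex[OF p] t this] show ?thesis by simp
    qed
  qed
qed

lemma minkowski2:
  fixes p a1 a2 b1 b2 :: real
  assumes p: "p \<ge> 1" and nn: "a1 \<ge> 0" "a2 \<ge> 0" "b1 \<ge> 0" "b2 \<ge> 0"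
  shows "((a1 + b1) powr p + (a2 + b2) powr p) powr (1/p)
     \<le> (a1 powr p + a2 powr p) powr (1/p) + (b1 powr p + b2 powr p) powr (1/p)"
proof -
  define A where "A = (a1 powr p + a2 powr p) powr (1/p)"
  define B where "B = (b1 powr p + b2 powr p) powr (1/p)"
  have A0: "A \<ge> 0" "B \<ge> 0" unfolding A_def B_def by auto
  have Ap: "A powr p = a1 powr p + a2 powr p" unfolding A_def using p
    by (simp add: powr_powr)
  have Bp: "B powr p = b1 powr p + b2 powr p" unfolding B_def using p
    by (simp add: powr_powr)
  show ?thesis
  proof (cases "A = 0 \<or> B = 0")
    case True
    then show ?thesis
    proof
      assume "A = 0"
      then have "a1 = 0" "a2 = 0" using Ap nn p
        by (smt (verit, best) powr_eq_0_iff powr_ge_zero powr_zero_eq_one)+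
      then show ?thesis using A_def B_def by simp
    next
      assume "B = 0"
      then have "b1 = 0" "b2 = 0" using Bp nn p
        by (smt (verit, best) powr_eq_0_iff powr_ge_zero powr_zero_eq_one)+
      then show ?thesis using A_def B_def by simp
    qed
  next
    case False
    then have Apos: "A > 0" "B > 0" using A0 by auto
    define t where "t = B / (A + B)"
    have t: "0 \<le> t" "t \<le> 1" "1 - t = A / (A + B)" using Apos unfolding t_def by (auto simp: field_simps)
    have eq: "(ai + bi) / (A + B) = (1 - t) * (ai / A) + t * (bi / B)" for ai bi
      unfolding t(3) unfolding t_def using Apos by (simp add: add_divide_distrib)
    have "((a1 + b1) / (A + B)) powr p + ((a2 + b2) / (A + B)) powr p
        \<le> ((1 - t) * (a1 / A) powr p + t * (b1 / B) powr p) + ((1 - t) * (a2 / A) powr p + t * (b2 / B) powr p)"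
      unfolding eq using powr_convex0[OF p t(1,2)] nn Apos
      by (intro add_mono; metis divide_nonneg_pos)
    also have "\<dots> = (1 - t) * ((a1 powr p + a2 powr p) / A powr p) + t * ((b1 powr p + b2 powr p) / B powr p)"
      using nn Apos by (simp add: powr_divide field_simps)
    also have "\<dots> = 1" unfolding Ap[symmetric] Bp[symmetric] using Apos by simp
    finally have X: "((a1 + b1) / (A + B)) powr p + ((a2 + b2) / (A + B)) powr p \<le> 1" .
    have "((a1 + b1) powr p + (a2 + b2) powr p) / (A + B) powr p
       = ((a1 + b1) / (A + B)) powr p + ((a2 + b2) / (A + B)) powr p"
      by (simp only: powr_divide add_divide_distrib[symmetric])
    with X have "((a1 + b1) powr p + (a2 + b2) powr p) / (A + B) powr p \<le> 1" by simp
    then have le: "(a1 + b1) powr p + (a2 + b2) powr p \<le> (A + B) powr p"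
      using Apos by (simp add: divide_le_eq)
    have "((a1 + b1) powr p + (a2 + b2) powr p) powr (1/p) \<le> ((A + B) powr p) powr (1/p)"
      using le p by (intro powr_mono2) auto
    also have "\<dots> = A + B" using p Apos by (simp add: powr_powr)
    finally show ?thesis unfolding A_def B_def .
  qed
qed


lemma ereal_cases_ge1:
  assumes "1 \<le> (r::ereal)"
  obtains "r = \<infinity>" | p where "r = ereal p" "p \<ge> 1"
  using assms by (cases r) auto

lemma lr_nonneg: "lr_norm r a b \<ge> 0"
  unfolding lr_norm_def by auto

lemma lr_sym: "lr_norm r a b = lr_norm r b a"
  unfolding lr_norm_def by (auto simp: max.commute add.commute)

lemma lr_zero_iff:
  assumes "1 \<le> r"
  shows "lr_norm r a b = 0 \<longleftrightarrow> a = 0 \<and> b = 0"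
  using assms
proof (cases rule: ereal_cases_ge1)
  case 1 then show ?thesis unfolding lr_norm_def by (auto simp: max_def)
next
  case (2 p)
  have "(\<bar>a\<bar> powr p + \<bar>b\<bar> powr p) powr (1/p) = 0 \<longleftrightarrow> \<bar>a\<bar> powr p + \<bar>b\<bar> powr p = 0"
    by simp
  also have "\<dots> \<longleftrightarrow> \<bar>a\<bar> powr p = 0 \<and> \<bar>b\<bar> powr p = 0"
    by (smt (verit) powr_ge_zero)
  also have "\<dots> \<longleftrightarrow> a = 0 \<and> b = 0" by simp
  finally show ?thesis using 2 unfolding lr_norm_def by simp
qed

lemma lr_mono:
  assumes "1 \<le> r" "0 \<le> a" "a \<le> a'" "0 \<le> b" "b \<le> b'"
  shows "lr_norm r a b \<le> lr_norm r a' b'"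
  using assms(1)
proof (cases rule: ereal_cases_ge1)
  case 1 then show ?thesis using assms unfolding lr_norm_def by auto
next
  case (2 p)
  then have "(a powr p + b powr p) powr (1/p) \<le> (a' powr p + b' powr p) powr (1/p)"
    using assms by (intro powr_mono2 add_mono) auto
  then show ?thesis using assms 2 unfolding lr_norm_def by auto
qed

lemma lr_triangle:
  assumes "1 \<le> r" "0 \<le> a1" "0 \<le> a2" "0 \<le> b1" "0 \<le> b2"
  shows "lr_norm r (a1 + b1) (a2 + b2) \<le> lr_norm r a1 a2 + lr_norm r b1 b2"
  using assms(1)
proof (cases rule: ereal_cases_ge1)
  case 1 then show ?thesis using assms unfolding lr_norm_def by auto
next
  case (2 p)
  then show ?thesis using assms minkowski2[of p a1 a2 b1 b2] unfolding lr_norm_def by auto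
qed

lemma lr_homog:
  assumes "1 \<le> r" "0 \<le> c"
  shows "lr_norm r (c * a) (c * b) = c * lr_norm r a b"
  using assms(1)
proof (cases rule: ereal_cases_ge1)
  case 1 then show ?thesis using assms unfolding lr_norm_def by (auto simp: abs_mult max_mult_distrib_left)
next
  case (2 p)
  have "(\<bar>c * a\<bar> powr p + \<bar>c * b\<bar> powr p) powr (1/p) = (c powr p * (\<bar>a\<bar> powr p + \<bar>b\<bar> powr p)) powr (1/p)"
    using assms by (simp add: abs_mult powr_mult distrib_left)
  also have "\<dots> = (c powr p) powr (1/p) * (\<bar>a\<bar> powr p + \<bar>b\<bar> powr p) powr (1/p)"
    by (simp add: powr_mult)
  also have "(c powr p) powr (1/p) = c" using 2 assms by (simp add: powr_powr)
  finally show ?thesis using 2 unfolding lr_norm_def by simp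
qed


lemma distfun_infdist: "D \<noteq> {} \<Longrightarrow> distfun D x = infdist x D"
  unfolding distfun_def infdist_def by (simp add: dist_norm)

lemma excess_infdist: "D \<noteq> {} \<Longrightarrow> excess C D = (SUP x\<in>C. infdist x D)"
  unfolding excess_def by (simp add: distfun_infdist)

lemma bdd_infdist: "compact C \<Longrightarrow> bdd_above ((\<lambda>x. infdist x D) ` C)"
  by (intro bounded_imp_bdd_above compact_imp_bounded compact_continuous_image continuous_intros)

lemma excess_upper:
  assumes "compact C" "D \<noteq> {}" "x \<in> C"
  shows "infdist x D \<le> excess C D"
  unfolding excess_infdist[OF assms(2)] using bdd_infdist[OF assms(1)] assms(3)
  by (rule cSUP_upper2) auto

lemma excess_nonneg:
  assumes "compact C" "C \<noteq> {}" "D \<noteq> {}"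
  shows "0 \<le> excess C D"
  using assms excess_upper[OF assms(1,3)] infdist_nonneg by (meson ex_in_conv order_trans)

lemma excess_self: "C \<noteq> {} \<Longrightarrow> excess C C = 0"
  unfolding excess_infdist by simp

lemma excess_zero:
  assumes "compact C" "closed D" "D \<noteq> {}" "excess C D = 0"
  shows "C \<subseteq> D"
proof
  fix x assume "x \<in> C"
  then have "infdist x D \<le> 0" using excess_upper[OF assms(1,3)] assms(4) by fastforce
  then have "infdist x D = 0" using infdist_nonneg by (metis order_antisym)
  then show "x \<in> D" using in_closed_iff_infdist_zero[OF assms(2,3)] by simp
qed

lemma excess_triangle:
  assumes "compact A" "compact B" "A \<noteq> {}" "B \<noteq> {}" "C \<noteq> {}"
  shows "excess A C \<le> excess A B + excess B C"
proof -
  have "infdist x C \<le> excess A B + excess B C" if x: "x \<in> A" for x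
  proof -
    obtain y where y: "y \<in> B" "infdist x B = dist x y"
      using infdist_attains_inf[of B x] assms(2,4) compact_imp_closed by auto
    have "infdist x C \<le> infdist y C + dist x y" by (rule infdist_triangle)
    also have "\<dots> \<le> excess B C + excess A B"
      using excess_upper[OF assms(2,5) y(1)] excess_upper[OF assms(1,4) x] y(2) by linarith
    finally show ?thesis by simp
  qed
  then show ?thesis unfolding excess_infdist[OF assms(5)] using assms(3)
    by (intro cSUP_least) auto
qed


lemma inner_unit_bounds:
  fixes u v :: "'a::euclidean_space"
  assumes "norm u = 1" "norm v = 1"
  shows "-1 \<le> u \<bullet> v" "u \<bullet> v \<le> 1"
  using Cauchy_Schwarz_ineq2[of u v] assms by auto

lemma unit_norm_diff:
  fixes u v :: "'a::euclidean_space"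
  assumes "norm u = 1" "norm v = 1"
  shows "norm (u - v) = 2 * sin (arccos (u \<bullet> v) / 2)"
proof -
  define c where "c = u \<bullet> v"
  have c: "-1 \<le> c" "c \<le> 1" using inner_unit_bounds[OF assms] c_def by auto
  define th where "th = arccos c"
  have th: "0 \<le> th" "th \<le> pi" "cos th = c" using c th_def arccos_lbound arccos_ubound cos_arccos by auto
  have s0: "sin (th / 2) \<ge> 0" using th by (intro sin_ge_zero) auto
  have "(2 * sin (th / 2))^2 = 2 - 2 * cos th"
    using cos_double_sin[of "th/2"] by (simp add: power_mult_distrib)
  also have "\<dots> = (norm (u - v))^2"
    using assms th(3) unfolding c_def norm_eq_1
    by (simp add: power2_norm_eq_inner inner_diff_left inner_diff_right inner_commute)
  finally have "(norm (u - v))^2 = (2 * sin (th / 2))^2" by simp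
  then have "norm (u - v) = 2 * sin (th / 2)"
    using s0 power2_eq_iff_nonneg[of "norm (u - v)" "2 * sin (th / 2)"] by simp
  then show ?thesis unfolding th_def c_def .
qed

lemma halfsin_mono:
  assumes "0 \<le> s" "s \<le> pi" "0 \<le> t" "t \<le> pi"
  shows "2 * sin (s / 2) \<le> 2 * sin (t / 2) \<longleftrightarrow> s \<le> t"
  using sin_mono_le_eq[of "s/2" "t/2"] assms by auto

lemma excess_theta:
  fixes A B :: "'a::euclidean_space set"
  assumes A: "compact A" "A \<noteq> {}" "A \<subseteq> unit_sphere"
      and B: "compact B" "B \<noteq> {}" "B \<subseteq> unit_sphere"
  shows "excess A B = 2 * sin ((SUP u\<in>A. INF v\<in>B. arccos (u \<bullet> v)) / 2)"
proof -
  define h where "h u = (INF v\<in>B. arccos (u \<bullet> v))" for u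
  have hprop: "0 \<le> h u \<and> h u \<le> pi \<and> infdist u B = 2 * sin (h u / 2)" if u: "u \<in> A" for u
  proof -
    have nu: "norm u = 1" using u A(3) unfolding unit_sphere_def by auto
    have cont: "continuous_on B (\<lambda>v. arccos (u \<bullet> v))"
    proof (rule continuous_on_compose2[of "{-1..1}" arccos])
      show "continuous_on {-1..1} arccos" by (rule continuous_on_arccos') 
      show "continuous_on B ((\<bullet>) u)" by (intro continuous_intros)
      show "(\<bullet>) u ` B \<subseteq> {-1..1}" using inner_unit_bounds[OF nu] B(3) unfolding unit_sphere_def by force
    qed
    obtain v0 where v0: "v0 \<in> B" "\<And>v. v \<in> B \<Longrightarrow> arccos (u \<bullet> v0) \<le> arccos (u \<bullet> v)"
      using continuous_attains_inf[OF B(1,2) cont] by auto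
    have hv0: "h u = arccos (u \<bullet> v0)" unfolding h_def
      using v0 by (intro cInf_eq_minimum) auto
    have nv: "norm v = 1" if "v \<in> B" for v using that B(3) unfolding unit_sphere_def by auto
    have "infdist u B = dist u v0"
    proof (rule antisym)
      show "infdist u B \<le> dist u v0" using v0(1) by (rule infdist_le)
      show "dist u v0 \<le> infdist u B"
        unfolding infdist_def using B(2)
      proof (simp, intro cINF_greatest)
        fix v assume v: "v \<in> B"
        have "2 * sin (arccos (u \<bullet> v0) / 2) \<le> 2 * sin (arccos (u \<bullet> v) / 2)"
          using v0(2)[OF v] halfsin_mono arccos_lbound arccos_ubound inner_unit_bounds nu nv v v0(1)
          by (metis)
        then show "dist u v0 \<le> dist u v"
          using unit_norm_diff[OF nu nv[OF v]] unit_norm_diff[OF nu nv[OF v0(1)]] by (simp add: dist_norm)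
      qed
    qed
    also have "\<dots> = 2 * sin (h u / 2)"
      using unit_norm_diff[OF nu nv[OF v0(1)]] hv0 by (simp add: dist_norm)
    finally show ?thesis
      using hv0 arccos_lbound arccos_ubound inner_unit_bounds[OF nu nv[OF v0(1)]] by auto
  qed
  have contA: "continuous_on A (\<lambda>x. infdist x B)" by (intro continuous_intros)
  obtain u0 where u0: "u0 \<in> A" "\<And>u. u \<in> A \<Longrightarrow> infdist u B \<le> infdist u0 B"
    using continuous_attains_sup[OF A(1,2) contA] by auto
  have ex: "excess A B = infdist u0 B"
    unfolding excess_infdist[OF B(2)] using u0 by (intro cSup_eq_maximum) auto
  have "(SUP u\<in>A. h u) = h u0"
  proof (intro cSup_eq_maximum)
    show "h u0 \<in> h ` A" using u0 by auto
    fix y assume "y \<in> h ` A"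
    then obtain u where u: "u \<in> A" "y = h u" by auto
    show "y \<le> h u0" using u0(2)[OF u(1)] hprop[OF u(1)] hprop[OF u0(1)] halfsin_mono u(2)
      by metis
  qed
  then show ?thesis using ex hprop[OF u0(1)] unfolding h_def by simp
qed


lemma unit_sphere_eq: "unit_sphere = sphere 0 1"
  unfolding unit_sphere_def by auto

lemma cone_sphere:
  fixes P :: "'a::euclidean_space set"
  assumes "P \<in> nz_closed_convex_cones"
  shows "compact (P \<inter> unit_sphere)" "P \<inter> unit_sphere \<noteq> {}" "P \<inter> unit_sphere \<subseteq> unit_sphere"
    "closed (P \<inter> unit_sphere)"
proof -
  have P: "closed P" "P \<noteq> {}" "conic P" "P \<noteq> {0}"
    using assms unfolding nz_closed_convex_cones_def convex_cone_def by auto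
  show c: "compact (P \<inter> unit_sphere)" unfolding unit_sphere_eq
    using P(1) by (simp add: closed_Int_compact)
  then show "closed (P \<inter> unit_sphere)" by (rule compact_imp_closed)
  show "P \<inter> unit_sphere \<subseteq> unit_sphere" by auto
  obtain x where x: "x \<in> P" "x \<noteq> 0" using P(2,4) by blast
  then have "(1 / norm x) *\<^sub>R x \<in> P \<inter> unit_sphere"
    using conicD[OF P(3) x(1), of "1 / norm x"] unfolding unit_sphere_def by auto
  then show "P \<inter> unit_sphere \<noteq> {}" by blast
qed

lemma cone_eq:
  fixes P Q :: "'a::euclidean_space set"
  assumes "P \<in> nz_closed_convex_cones" "Q \<in> nz_closed_convex_cones"
    and "P \<inter> unit_sphere \<subseteq> Q \<inter> unit_sphere"
  shows "P \<subseteq> Q"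
proof
  have Q: "Q \<noteq> {}" "conic Q" and P: "conic P"
    using assms unfolding nz_closed_convex_cones_def convex_cone_def by auto
  fix x assume x: "x \<in> P"
  show "x \<in> Q"
  proof (cases "x = 0")
    case True then show ?thesis using Q by (metis conic_contains_0)
  next
    case False
    then have "(1 / norm x) *\<^sub>R x \<in> P \<inter> unit_sphere"
      using conicD[OF P x, of "1 / norm x"] unfolding unit_sphere_def by auto
    then have "(1 / norm x) *\<^sub>R x \<in> Q" using assms(3) by auto
    from conicD[OF Q(2) this, of "norm x"] False show ?thesis by simp
  qed
qed

theorem mainTheorem4:
  fixes r :: ereal
  assumes "1 \<le> r"
  shows "is_distance_on (nz_closed_convex_cones :: 'a::euclidean_space set set) (Dis_r r)
    \<and> (\<forall>P\<in>(nz_closed_convex_cones :: 'a set set). \<forall>Q\<in>nz_closed_convex_cones.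
          Dis_r r P Q = 2 * lr_norm r (sin (Theta P Q / 2)) (sin (Theta Q P / 2))
        \<and> excess (P \<inter> unit_sphere) (Q \<inter> unit_sphere) = 2 * sin (Theta P Q / 2))"
proof (intro conjI ballI)
  have ex: "excess (P \<inter> unit_sphere) (Q \<inter> unit_sphere) = 2 * sin (Theta P Q / 2)"
    if P: "P \<in> (nz_closed_convex_cones :: 'a set set)" and Q: "Q \<in> nz_closed_convex_cones" for P Q
    unfolding Theta_def using cone_sphere[OF P] cone_sphere[OF Q] by (intro excess_theta) auto
  fix P Q :: "'a set" assume P: "P \<in> nz_closed_convex_cones" and Q: "Q \<in> nz_closed_convex_cones"
  show "excess (P \<inter> unit_sphere) (Q \<inter> unit_sphere) = 2 * sin (Theta P Q / 2)" using ex P Q by blast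
  show "Dis_r r P Q = 2 * lr_norm r (sin (Theta P Q / 2)) (sin (Theta Q P / 2))"
    unfolding Dis_r_def dis_r_def ex[OF P Q] ex[OF Q P] using lr_homog[OF assms, of 2] by simp
next
  show "is_distance_on (nz_closed_convex_cones :: 'a set set) (Dis_r r)"
    unfolding is_distance_on_def
  proof (intro conjI ballI)
    fix P Q R :: "'a set"
    assume P: "P \<in> nz_closed_convex_cones" and Q: "Q \<in> nz_closed_convex_cones"
    note sP = cone_sphere[OF P] and sQ = cone_sphere[OF Q]
    show "0 \<le> Dis_r r P Q" unfolding Dis_r_def dis_r_def by (rule lr_nonneg)
    show "Dis_r r P Q = Dis_r r Q P" unfolding Dis_r_def dis_r_def by (rule lr_sym)
    show "(Dis_r r P Q = 0) = (P = Q)"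
    proof
      assume "Dis_r r P Q = 0"
      then have "excess (P \<inter> unit_sphere) (Q \<inter> unit_sphere) = 0"
        "excess (Q \<inter> unit_sphere) (P \<inter> unit_sphere) = 0"
        unfolding Dis_r_def dis_r_def lr_zero_iff[OF assms] by auto
      then have "P \<inter> unit_sphere \<subseteq> Q \<inter> unit_sphere" "Q \<inter> unit_sphere \<subseteq> P \<inter> unit_sphere"
        using excess_zero sP sQ by blast+
      then show "P = Q" using cone_eq P Q by blast
    next
      assume "P = Q"
      then show "Dis_r r P Q = 0"
        unfolding Dis_r_def dis_r_def lr_zero_iff[OF assms] using excess_self[OF sP(2)] by simp
    qed
  next
    fix P Q R :: "'a set"
    assume P: "P \<in> nz_closed_convex_cones" and Q: "Q \<in> nz_closed_convex_cones"
      and R: "R \<in> nz_closed_convex_cones"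
    note sP = cone_sphere[OF P] and sQ = cone_sphere[OF Q] and sR = cone_sphere[OF R]
    let ?P = "P \<inter> unit_sphere" and ?Q = "Q \<inter> unit_sphere" and ?R = "R \<inter> unit_sphere"
    have "Dis_r r P R \<le> lr_norm r (excess ?P ?Q + excess ?Q ?R) (excess ?R ?Q + excess ?Q ?P)"
      unfolding Dis_r_def dis_r_def
      by (intro lr_mono[OF assms] excess_triangle excess_nonneg sP(1,2) sQ(1,2) sR(1,2))
    also have "\<dots> \<le> Dis_r r P Q + Dis_r r Q R"
      unfolding Dis_r_def dis_r_def
      using lr_triangle[OF assms, of "excess ?P ?Q" "excess ?Q ?P" "excess ?Q ?R" "excess ?R ?Q"]
        excess_nonneg[OF sP(1,2) sQ(2)] excess_nonneg[OF sQ(1,2) sP(2)]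
        excess_nonneg[OF sQ(1,2) sR(2)] excess_nonneg[OF sR(1,2) sQ(2)] by (simp add: add.commute)
    finally show "Dis_r r P R \<le> Dis_r r P Q + Dis_r r Q R" .
  qed
qed

end
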